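(* Let $P$ be an optimal planning problem that has a feasible solution and whose optimal cost $C^*$ is attained. Let $A$ be a well-behaved randomized feasible planner. Consider Asymptotically-optimal$(P,A,n)$: run $A$ on $P_\infty$ to obtain $y_0$ and set $c_0=C(y_0)$; for $i=1,\dots,n$ run $A$ on $P_{c_{i-1}}$ to obtain $y_i$ and set $c_i=C(y_i)$; return $y_n$. Then this procedure is asymptotically optimal: for every $\epsilon>0$, $\Pr\big(C(y_n)-C^*\ge\epsilon\big)\to 0$ as $n\to\infty$, and $C(y_n)\to C^*$ with probability 1.
   Context: A feasible kinodynamic planning problem asks for $S\ge0$, $y:[0,S]\to X$, $u:[0,S]\to U$ with $y(0)=x_I$, $y(S)\in G$, $y(s)\in F$, $u(s)\in B(y(s))$, $y'(s)=D(y(s),u(s))$ for all $s$. An optimal planning problem $P$ also specifies an incremental cost $L$ and terminal cost $\Phi$ and minimizes $C(y)=\int_0^S L(y(s),u(s))ds+\Phi(y(S))$ over feasible solutions, with minimum $C^*$. For $\bar c\in\mathbb{R}\cup\{\infty\}$, $P_{\bar c}$ is the feasible kinodynamic problem (in state-cost space, with augmented state $(x,c)$, start $(x_I,0)$, dynamics $x'=D(x,u)$, $c'=L(x,u)$, goal $\{(x,c):x\in G,\ c+\Phi(x)\le\bar c\}$) whose solutions are exactly the feasible trajectories of $P$ with $C(y)\le\bar c$. A randomized planner $A$, run on $P_{\bar c}$, returns a random solution $y$. $A$ is well-behaved if (1) whenever a feasible solution exists and $\bar c>C^*$, $A$ on $P_{\bar c}$ terminates in finite time; and (2) there is a constant $w>0$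 such that for every cost bound $\bar c$, the returned solution satisfies $E\big[C(y)-C^*\mid\bar c\big]\le(1-w)(\bar c-C^* )$. *)

theory Defs
  imports "HOL-Probability.Probability"
begin

record ('x, 'u) opt_problem =
  StateSp :: "'x set"
  CtrlSp  :: "'u set"
  x_init  :: "'x"
  Goal    :: "'x set"
  Free    :: "'x set"
  Adm     :: "'x \<Rightarrow> 'u set"
  Dyn     :: "'x \<Rightarrow> 'u \<Rightarrow> 'x"
  IncCost :: "'x \<Rightarrow> 'u \<Rightarrow> real"
  TermCost :: "'x \<Rightarrow> real"

text \<open>A candidate solution (S, y, u): duration, state trajectory, control trajectory.\<close>
type_synonym ('x, 'u) traj = "real \<times> (real \<Rightarrow> 'x) \<times> (real \<Rightarrow> 'u)"

definition feasible :: "('x::real_normed_vector, 'u) opt_problem \<Rightarrow> ('x, 'u) traj \<Rightarrow> bool" where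
  "feasible P t \<longleftrightarrow> (case t of (S, y, u) \<Rightarrow>
     S \<ge> 0 \<and> y 0 = x_init P \<and> y S \<in> Goal P \<and>
     (\<forall>s\<in>{0..S}. y s \<in> StateSp P \<and> u s \<in> CtrlSp P \<and> y s \<in> Free P \<and>
        u s \<in> Adm P (y s) \<and>
        (y has_vector_derivative Dyn P (y s) (u s)) (at s within {0..S})) \<and>
     (\<lambda>s. IncCost P (y s) (u s)) integrable_on {0..S})"

definition cost :: "('x::real_normed_vector, 'u) opt_problem \<Rightarrow> ('x, 'u) traj \<Rightarrow> real" where
  "cost P t = (case t of (S, y, u) \<Rightarrow>
     integral {0..S} (\<lambda>s. IncCost P (y s) (u s)) + TermCost P (y S))"

definition opt_cost :: "('x::real_normed_vector, 'u) opt_problem \<Rightarrow> real" where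
  "opt_cost P = Inf (cost P ` {t. feasible P t})"

definition sol_bound :: "('x::real_normed_vector, 'u) opt_problem \<Rightarrow> ereal \<Rightarrow> ('x, 'u) traj \<Rightarrow> bool" where
  "sol_bound P cb t \<longleftrightarrow> feasible P t \<and> ereal (cost P t) \<le> cb"

text \<open>A randomized planner is modelled as a deterministic function A of the cost bound
  and of a random seed drawn from the probability space R (fresh seed for every run).\<close>
definition randomized_planner ::
  "('x::real_normed_vector, 'u) opt_problem \<Rightarrow> 'r measure \<Rightarrow> (ereal \<Rightarrow> 'r \<Rightarrow> ('x, 'u) traj) \<Rightarrow> bool" where
  "randomized_planner P R A \<longleftrightarrow> prob_space R \<and>
     (\<lambda>p. cost P (A (fst p) (snd p))) \<in> borel_measurable (borel \<Otimes>\<^sub>M R)"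

definition well_behaved ::
  "('x::real_normed_vector, 'u) opt_problem \<Rightarrow> 'r measure \<Rightarrow> (ereal \<Rightarrow> 'r \<Rightarrow> ('x, 'u) traj) \<Rightarrow> bool" where
  "well_behaved P R A \<longleftrightarrow>
     (\<forall>cb. (\<exists>t. sol_bound P cb t) \<longrightarrow> (\<forall>\<omega>\<in>space R. sol_bound P cb (A cb \<omega>))) \<and>
     (\<exists>w>0. \<forall>c::real. c \<ge> opt_cost P \<longrightarrow>
        (\<integral>\<omega>. cost P (A (ereal c) \<omega>) - opt_cost P \<partial>R) \<le> (1 - w) * (c - opt_cost P))"

primrec ao_run ::
  "('x::real_normed_vector, 'u) opt_problem \<Rightarrow> (ereal \<Rightarrow> 'r \<Rightarrow> ('x, 'u) traj) \<Rightarrow> nat \<Rightarrow> (nat \<Rightarrow> 'r) \<Rightarrow> ('x, 'u) traj" where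
  "ao_run P A 0 \<omega> = A \<infinity> (\<omega> 0)"
| "ao_run P A (Suc i) \<omega> = A (ereal (cost P (ao_run P A i \<omega>))) (\<omega> (Suc i))"

end

theory Submission imports Defs begin

primrec rs :: "('x::real_normed_vector, 'u) opt_problem \<Rightarrow> (ereal \<Rightarrow> 'r \<Rightarrow> ('x, 'u) traj) \<Rightarrow> real \<Rightarrow> nat \<Rightarrow> 'r stream \<Rightarrow> real" where
  "rs P A c 0 s = c"
| "rs P A c (Suc n) s = cost P (A (ereal (rs P A c n s)) (s !! n))"

lemma rs_shift: "rs P A c (Suc n) s = rs P A (cost P (A (ereal c) (shd s))) n (stl s)"
  by (induction n) simp_all

lemma ao_rs: "cost P (ao_run P A n (\<lambda>i. (x ## s) !! i)) = rs P A (cost P (A \<infinity> x)) n s"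
  by (induction n) auto

locale setting =
  fixes P :: "('x::real_normed_vector, 'u) opt_problem"
    and R :: "'r measure"
    and A :: "ereal \<Rightarrow> 'r \<Rightarrow> ('x, 'u) traj"
  assumes attained: "\<exists>t. feasible P t \<and> (\<forall>t'. feasible P t' \<longrightarrow> cost P t \<le> cost P t')"
    and planner: "randomized_planner P R A"
    and wb: "well_behaved P R A"
begin

lemma ps: "prob_space R" using planner unfolding randomized_planner_def by auto

lemma jm: "(\<lambda>p. cost P (A (fst p) (snd p))) \<in> borel_measurable (borel \<Otimes>\<^sub>M R)"
  using planner unfolding randomized_planner_def by auto

lemma meas_F: "f \<in> measurable M borel \<Longrightarrow> g \<in> measurable M R \<Longrightarrow> (\<lambda>x. cost P (A (f x) (g x))) \<in> borel_measurable M"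
  using measurable_compose[OF measurable_Pair[of f M borel g R] jm] by simp

lemma opt: obtains t0 where "feasible P t0" "opt_cost P = cost P t0"
    "\<And>t. feasible P t \<Longrightarrow> opt_cost P \<le> cost P t"
proof -
  obtain t0 where t0: "feasible P t0" "\<And>t'. feasible P t' \<Longrightarrow> cost P t0 \<le> cost P t'"
    using attained by auto
  have "opt_cost P = cost P t0" unfolding opt_cost_def
    by (rule cInf_eq_minimum) (use t0 in auto)
  then show ?thesis using that t0 by auto
qed

lemma F_bounds:
  assumes "ereal (opt_cost P) \<le> cb" "x \<in> space R"
  shows "feasible P (A cb x)" "opt_cost P \<le> cost P (A cb x)" "ereal (cost P (A cb x)) \<le> cb"
proof -
  obtain t0 where "feasible P t0" "opt_cost P = cost P t0"
    "\<And>t. feasible P t \<Longrightarrow> opt_cost P \<le> cost P t" using opt by blast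
  then have "sol_bound P cb t0" using assms unfolding sol_bound_def by auto
  then have "sol_bound P cb (A cb x)" using wb assms unfolding well_behaved_def by blast
  then show "feasible P (A cb x)" "ereal (cost P (A cb x)) \<le> cb" unfolding sol_bound_def by auto
  then show "opt_cost P \<le> cost P (A cb x)" using \<open>\<And>t. feasible P t \<Longrightarrow> opt_cost P \<le> cost P t\<close> by auto
qed

lemma rs_meas: "(\<lambda>s. rs P A c n s) \<in> borel_measurable (stream_space R)"
proof (induction n)
  case (Suc n)
  have "(\<lambda>s. ereal (rs P A c n s)) \<in> borel_measurable (stream_space R)"
    using Suc by measurable
  then show ?case by (simp add: meas_F[OF _ measurable_snth])
qed simp

lemma rs_bounds: "opt_cost P \<le> c \<Longrightarrow> s \<in> streams (space R) \<Longrightarrow> opt_cost P \<le> rs P A c n s \<and> rs P A c n s \<le> c"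
proof (induction n)
  case (Suc n)
  then have "ereal (opt_cost P) \<le> ereal (rs P A c n s)" "s !! n \<in> space R" by (auto simp: snth_in)
  from F_bounds[OF this] Suc show ?case by auto
qed simp

lemma F_meas: "(\<lambda>x. cost P (A cb x)) \<in> borel_measurable R"
  by (rule meas_F) auto

lemma contraction: obtains q where "0 \<le> q" "q < 1"
  "\<And>c. opt_cost P \<le> c \<Longrightarrow> (\<integral>\<^sup>+x. ennreal (cost P (A (ereal c) x) - opt_cost P) \<partial>R) \<le> ennreal (q * (c - opt_cost P))"
proof -
  interpret prob_space R by (rule ps)
  obtain w where w: "w > 0" "\<And>c::real. c \<ge> opt_cost P \<Longrightarrow>
        (\<integral>\<omega>. cost P (A (ereal c) \<omega>) - opt_cost P \<partial>R) \<le> (1 - w) * (c - opt_cost P)"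
    using wb unfolding well_behaved_def by blast
  define q where "q = max 0 (1 - w)"
  have "0 \<le> q" "q < 1" using w by (auto simp: q_def)
  moreover have "(\<integral>\<^sup>+x. ennreal (cost P (A (ereal c) x) - opt_cost P) \<partial>R) \<le> ennreal (q * (c - opt_cost P))"
    if c: "opt_cost P \<le> c" for c
  proof -
    have b: "\<And>x. x \<in> space R \<Longrightarrow> opt_cost P \<le> cost P (A (ereal c) x) \<and> cost P (A (ereal c) x) \<le> c"
      using F_bounds[of "ereal c"] c by auto
    have int: "integrable R (\<lambda>x. cost P (A (ereal c) x) - opt_cost P)"
      by (rule integrable_const_bound[where B="c - opt_cost P"]) (use b F_meas in auto)
    have "(\<integral>\<^sup>+x. ennreal (cost P (A (ereal c) x) - opt_cost P) \<partial>R)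
        = ennreal (\<integral>x. cost P (A (ereal c) x) - opt_cost P \<partial>R)"
      by (rule nn_integral_eq_integral[OF int]) (use b in auto)
    also have "\<dots> \<le> ennreal (q * (c - opt_cost P))"
    proof (rule ennreal_leI)
      have "(1 - w) * (c - opt_cost P) \<le> q * (c - opt_cost P)"
        using c by (intro mult_right_mono) (auto simp: q_def)
      then show "(\<integral>x. cost P (A (ereal c) x) - opt_cost P \<partial>R) \<le> q * (c - opt_cost P)"
        using w(2)[OF c] by linarith
    qed
    finally show ?thesis .
  qed
  ultimately show ?thesis using that by blast
qed

lemma rs_integral:
  assumes q: "0 \<le> q"
    and hq: "\<And>c. opt_cost P \<le> c \<Longrightarrow> (\<integral>\<^sup>+x. ennreal (cost P (A (ereal c) x) - opt_cost P) \<partial>R) \<le> ennreal (q * (c - opt_cost P))"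
  shows "opt_cost P \<le> c \<Longrightarrow> (\<integral>\<^sup>+s. ennreal (rs P A c n s - opt_cost P) \<partial>stream_space R) \<le> ennreal (q ^ n * (c - opt_cost P))"
proof (induction n arbitrary: c)
  case 0
  interpret S: prob_space "stream_space R" using ps by (rule prob_space.prob_space_stream_space)
  have "(\<integral>\<^sup>+s. ennreal (rs P A c 0 s - opt_cost P) \<partial>stream_space R) = ennreal (c - opt_cost P) * emeasure (stream_space R) (space (stream_space R))"
    by (simp add: nn_integral_const)
  then show ?case by (simp add: S.emeasure_space_1)
next
  case (Suc n)
  interpret prob_space R by (rule ps)
  let ?C = "opt_cost P"
  have "(\<integral>\<^sup>+s. ennreal (rs P A c (Suc n) s - ?C) \<partial>stream_space R)
      = (\<integral>\<^sup>+x. (\<integral>\<^sup>+s. ennreal (rs P A c (Suc n) (x ## s) - ?C) \<partial>stream_space R) \<partial>R)"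
    by (rule nn_integral_stream_space) (use rs_meas in measurable)
  also have "\<dots> = (\<integral>\<^sup>+x. (\<integral>\<^sup>+s. ennreal (rs P A (cost P (A (ereal c) x)) n s - ?C) \<partial>stream_space R) \<partial>R)"
    by (simp only: rs_shift stream.sel)
  also have "\<dots> \<le> (\<integral>\<^sup>+x. ennreal (q ^ n) * ennreal (cost P (A (ereal c) x) - ?C) \<partial>R)"
  proof (rule nn_integral_mono)
    fix x assume x: "x \<in> space R"
    have h: "?C \<le> cost P (A (ereal c) x)" using F_bounds[of "ereal c" x] Suc.prems x by auto
    from Suc.IH[OF this] show "(\<integral>\<^sup>+s. ennreal (rs P A (cost P (A (ereal c) x)) n s - ?C) \<partial>stream_space R)
        \<le> ennreal (q ^ n) * ennreal (cost P (A (ereal c) x) - ?C)"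
      using q h by (subst ennreal_mult[symmetric]) auto
  qed
  also have "\<dots> = ennreal (q ^ n) * (\<integral>\<^sup>+x. ennreal (cost P (A (ereal c) x) - ?C) \<partial>R)"
    by (rule nn_integral_cmult) (use F_meas in measurable)
  also have "\<dots> \<le> ennreal (q ^ n) * ennreal (q * (c - ?C))"
    by (rule mult_left_mono[OF hq[OF Suc.prems]]) simp
  also have "\<dots> = ennreal (q ^ Suc n * (c - ?C))"
    using q Suc.prems by (simp add: ennreal_mult[symmetric] mult_ac)
  finally show ?case .
qed

lemma ao_meas: "(\<lambda>\<omega>. cost P (ao_run P A n \<omega>)) \<in> borel_measurable (PiM UNIV (\<lambda>_::nat. R))"
proof (induction n)
  case 0
  show ?case by simp (rule meas_F, auto)
next
  case (Suc n)
  have "(\<lambda>s. ereal (cost P (ao_run P A n s))) \<in> borel_measurable (PiM UNIV (\<lambda>_::nat. R))"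
    using Suc by measurable
  then show ?case by (simp, intro meas_F) auto
qed

lemma to_stream_snth: "to_stream \<omega> !! i = \<omega> i"
  by (simp add: to_stream_def)

lemma to_stream_snth': "(\<lambda>i. to_stream \<omega> !! i) = \<omega>"
  by (rule ext) (simp add: to_stream_def)

lemma key_bound:
  assumes q: "0 \<le> q"
    and hq: "\<And>c. opt_cost P \<le> c \<Longrightarrow> (\<integral>\<^sup>+x. ennreal (cost P (A (ereal c) x) - opt_cost P) \<partial>R) \<le> ennreal (q * (c - opt_cost P))"
    and e: "\<epsilon> > 0"
  shows "measure (PiM UNIV (\<lambda>_::nat. R)) {\<omega> \<in> space (PiM UNIV (\<lambda>_::nat. R)). cost P (ao_run P A n \<omega>) - opt_cost P \<ge> \<epsilon>}
     \<le> (\<integral>x. min 1 (q ^ n * (cost P (A \<infinity> x) - opt_cost P) / \<epsilon>) \<partial>R)"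
proof -
  interpret prob_space R by (rule ps)
  interpret S: prob_space "stream_space R" using ps by (rule prob_space.prob_space_stream_space)
  let ?C = "opt_cost P"
  let ?Pi = "PiM UNIV (\<lambda>_::nat. R)"
  let ?S = "stream_space R"
  define h where "h = (\<lambda>x. min 1 (q ^ n * (cost P (A \<infinity> x) - ?C) / \<epsilon>))"
  define Y where "Y = {s \<in> space ?S. \<epsilon> \<le> cost P (ao_run P A n (\<lambda>i. s !! i)) - ?C}"
  have Fi: "\<And>x. x \<in> space R \<Longrightarrow> ?C \<le> cost P (A \<infinity> x)" using F_bounds[of \<infinity>] by auto
  have hnn: "\<And>x. x \<in> space R \<Longrightarrow> 0 \<le> h x" unfolding h_def using Fi q e by auto
  have hm: "h \<in> borel_measurable R" unfolding h_def using F_meas[of \<infinity>] by measurable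
  have Ym: "Y \<in> sets ?S"
  proof -
    have "(\<lambda>s. cost P (ao_run P A n (\<lambda>i. s !! i))) \<in> borel_measurable ?S"
      using measurable_compose[OF measurable_snth_PiM ao_meas] by simp
    then show ?thesis unfolding Y_def by measurable
  qed
  have "measure ?Pi {\<omega> \<in> space ?Pi. cost P (ao_run P A n \<omega>) - ?C \<ge> \<epsilon>} = measure ?S Y"
  proof -
    have "measure ?S Y = measure ?Pi (to_stream -` Y \<inter> space ?Pi)"
      by (subst stream_space_eq_distr) (rule measure_distr[OF measurable_to_stream], simp add: Ym)
    also have "to_stream -` Y \<inter> space ?Pi = {\<omega> \<in> space ?Pi. cost P (ao_run P A n \<omega>) - ?C \<ge> \<epsilon>}"
      using measurable_space[OF measurable_to_stream[of R]]
      by (auto simp: Y_def to_stream_snth')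
    finally show ?thesis by simp
  qed
  also have "measure ?S Y \<le> integral\<^sup>L R h"
  proof -
    have "emeasure ?S Y = (\<integral>\<^sup>+x. emeasure ?S {s\<in>space ?S. x ## s \<in> Y} \<partial>R)"
      by (rule emeasure_stream_space[OF Ym])
    also have "\<dots> \<le> (\<integral>\<^sup>+x. ennreal (h x) \<partial>R)"
    proof (rule nn_integral_mono)
      fix x assume x: "x \<in> space R"
      define c where "c = cost P (A \<infinity> x)"
      have c: "?C \<le> c" using Fi x by (simp add: c_def)
      define Z where "Z = {s\<in>space ?S. \<epsilon> \<le> rs P A c n s - ?C}"
      have eqZ: "{s\<in>space ?S. x ## s \<in> Y} = Z"
        using x by (auto simp: Y_def Z_def c_def ao_rs stream_space_Stream)
      have Zm: "Z \<in> sets ?S" unfolding Z_def using rs_meas[of c n] by measurable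
      have b1: "emeasure ?S Z \<le> 1" by (rule S.emeasure_le_1)
      have "emeasure ?S Z = (\<integral>\<^sup>+s. indicator Z s \<partial>?S)" using Zm by simp
      also have "\<dots> \<le> (\<integral>\<^sup>+s. ennreal (1/\<epsilon>) * ennreal (rs P A c n s - ?C) \<partial>?S)"
      proof (rule nn_integral_mono)
        fix s assume s: "s \<in> space ?S"
        show "indicator Z s \<le> ennreal (1/\<epsilon>) * ennreal (rs P A c n s - ?C)"
        proof (cases "s \<in> Z")
          case True
          then have "1 \<le> (1/\<epsilon>) * (rs P A c n s - ?C)" using e by (auto simp: Z_def field_simps)
          then have "ennreal 1 \<le> ennreal ((1/\<epsilon>) * (rs P A c n s - ?C))" by (rule ennreal_leI)
          then show ?thesis using True e by (subst ennreal_mult[symmetric]) (auto simp: Z_def)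
        qed simp
      qed
      also have "\<dots> = ennreal (1/\<epsilon>) * (\<integral>\<^sup>+s. ennreal (rs P A c n s - ?C) \<partial>?S)"
        by (rule nn_integral_cmult) (use rs_meas in measurable)
      also have "\<dots> \<le> ennreal (1/\<epsilon>) * ennreal (q ^ n * (c - ?C))"
        by (rule mult_left_mono[OF rs_integral[OF q hq c]]) (auto intro: zero_le)
      also have "\<dots> = ennreal (q ^ n * (c - ?C) / \<epsilon>)"
        using e q c by (subst ennreal_mult[symmetric]) auto
      finally have b2: "emeasure ?S Z \<le> ennreal (q ^ n * (c - ?C) / \<epsilon>)" .
      show "emeasure ?S {s\<in>space ?S. x ## s \<in> Y} \<le> ennreal (h x)"
        unfolding eqZ h_def c_def[symmetric]
        using b1 b2 by (cases "q ^ n * (c - ?C) / \<epsilon> \<le> 1") (auto simp: min_def)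
    qed
    also have "\<dots> = ennreal (integral\<^sup>L R h)"
    proof (rule nn_integral_eq_integral)
      show "integrable R h"
        by (rule integrable_const_bound[where B=1]) (use hnn hm in \<open>auto simp: h_def\<close>)
    qed (use hnn in auto)
    finally have "ennreal (measure ?S Y) \<le> ennreal (integral\<^sup>L R h)"
      by (simp add: S.emeasure_eq_measure)
    moreover have "0 \<le> integral\<^sup>L R h" by (rule integral_nonneg_AE) (use hnn in auto)
    ultimately show ?thesis by (simp add: ennreal_le_iff)
  qed
  finally show ?thesis unfolding h_def .
qed

lemma conv_prob:
  assumes e: "\<epsilon> > 0"
  shows "(\<lambda>n. measure (PiM UNIV (\<lambda>_::nat. R))
              {\<omega> \<in> space (PiM UNIV (\<lambda>_::nat. R)). cost P (ao_run P A n \<omega>) - opt_cost P \<ge> \<epsilon>}) \<longlonglongrightarrow> 0"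
proof -
  interpret prob_space R by (rule ps)
  obtain q where q: "0 \<le> q" "q < 1"
    and hq: "\<And>c. opt_cost P \<le> c \<Longrightarrow> (\<integral>\<^sup>+x. ennreal (cost P (A (ereal c) x) - opt_cost P) \<partial>R) \<le> ennreal (q * (c - opt_cost P))"
    using contraction by blast
  define h where "h = (\<lambda>n x. min 1 (q ^ n * (cost P (A \<infinity> x) - opt_cost P) / \<epsilon>))"
  have Fi: "\<And>x. x \<in> space R \<Longrightarrow> opt_cost P \<le> cost P (A \<infinity> x)" using F_bounds[of \<infinity>] by auto
  have "(\<lambda>n. integral\<^sup>L R (h n)) \<longlonglongrightarrow> integral\<^sup>L R (\<lambda>_. 0::real)"
  proof (rule integral_dominated_convergence[where w="\<lambda>_. 1"])
    show "\<And>n. h n \<in> borel_measurable R" unfolding h_def using F_meas[of \<infinity>] by measurable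
    show "AE x in R. (\<lambda>n. h n x) \<longlonglongrightarrow> 0"
    proof (rule AE_I2)
      fix x
      have qn: "(\<lambda>n. q ^ n) \<longlonglongrightarrow> 0" using q by (intro LIMSEQ_power_zero) auto
      have "(\<lambda>n. q ^ n * (cost P (A \<infinity> x) - opt_cost P) / \<epsilon>) \<longlonglongrightarrow> 0 * (cost P (A \<infinity> x) - opt_cost P) / \<epsilon>"
        by (intro tendsto_divide tendsto_mult tendsto_const qn) (use e in auto)
      then have "(\<lambda>n. min 1 (q ^ n * (cost P (A \<infinity> x) - opt_cost P) / \<epsilon>)) \<longlonglongrightarrow> min 1 (0 * (cost P (A \<infinity> x) - opt_cost P) / \<epsilon>)"
        by (rule tendsto_min[OF tendsto_const])
      then show "(\<lambda>n. h n x) \<longlonglongrightarrow> 0" by (simp add: h_def)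
    qed
    show "\<And>n. AE x in R. norm (h n x) \<le> 1"
      using Fi q e by (auto simp: h_def)
  qed auto
  then have lim: "(\<lambda>n. integral\<^sup>L R (h n)) \<longlonglongrightarrow> 0" by simp
  show ?thesis
  proof (rule tendsto_sandwich[OF _ _ tendsto_const lim])
    show "\<forall>\<^sub>F n in sequentially. 0 \<le> measure (PiM UNIV (\<lambda>_::nat. R))
              {\<omega> \<in> space (PiM UNIV (\<lambda>_::nat. R)). cost P (ao_run P A n \<omega>) - opt_cost P \<ge> \<epsilon>}"
      by simp
    show "\<forall>\<^sub>F n in sequentially. measure (PiM UNIV (\<lambda>_::nat. R))
              {\<omega> \<in> space (PiM UNIV (\<lambda>_::nat. R)). cost P (ao_run P A n \<omega>) - opt_cost P \<ge> \<epsilon>} \<le> integral\<^sup>L R (h n)"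
      using key_bound[OF q(1) hq e] by (simp add: h_def)
  qed
qed

lemma ao_bounds:
  assumes "\<omega> \<in> space (PiM UNIV (\<lambda>_::nat. R))"
  shows "opt_cost P \<le> cost P (ao_run P A n \<omega>) \<and> cost P (ao_run P A (Suc n) \<omega>) \<le> cost P (ao_run P A n \<omega>)"
proof -
  have sp: "\<And>i. \<omega> i \<in> space R" using assms by (auto simp: space_PiM PiE_def Pi_def)
  have lb: "opt_cost P \<le> cost P (ao_run P A n \<omega>)" for n
  proof (induction n)
    case 0 then show ?case using F_bounds[of \<infinity>] sp by auto
  next
    case (Suc m)
    then show ?case using F_bounds(2)[of "ereal (cost P (ao_run P A m \<omega>))" "\<omega> (Suc m)"] sp by simp
  qed
  have "ereal (cost P (A (ereal (cost P (ao_run P A n \<omega>))) (\<omega> (Suc n)))) \<le> ereal (cost P (ao_run P A n \<omega>))"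
    using F_bounds(3)[of "ereal (cost P (ao_run P A n \<omega>))" "\<omega> (Suc n)"] lb sp by auto
  then show ?thesis using lb by simp
qed

lemma conv_ae: "AE \<omega> in PiM UNIV (\<lambda>_::nat. R). (\<lambda>n. cost P (ao_run P A n \<omega>)) \<longlonglongrightarrow> opt_cost P"
proof -
  let ?Pi = "PiM UNIV (\<lambda>_::nat. R)"
  interpret PP: prob_space ?Pi
    using ps by (intro prob_space_PiM) auto
  have null: "AE \<omega> in ?Pi. \<exists>n. cost P (ao_run P A n \<omega>) - opt_cost P < 1 / real (Suc k)" for k
  proof -
    define N where "N = {\<omega> \<in> space ?Pi. \<forall>n. 1 / real (Suc k) \<le> cost P (ao_run P A n \<omega>) - opt_cost P}"
    have Nm: "N \<in> sets ?Pi" unfolding N_def using ao_meas by measurable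
    have "measure ?Pi N \<le> 0"
    proof (rule tendsto_le[OF trivial_limit_sequentially conv_prob tendsto_const])
      show "0 < 1 / real (Suc k)" by simp
      show "\<forall>\<^sub>F n in sequentially. measure ?Pi N \<le> measure ?Pi
          {\<omega> \<in> space ?Pi. 1 / real (Suc k) \<le> cost P (ao_run P A n \<omega>) - opt_cost P}"
        by (intro always_eventually allI PP.finite_measure_mono) (use ao_meas in \<open>auto simp: N_def\<close>)
    qed
    then have "N \<in> null_sets ?Pi" using Nm
      by (auto simp: null_sets_def PP.emeasure_eq_measure measure_nonneg[of ?Pi N] intro: antisym)
    then show ?thesis by (rule AE_I') (auto simp: N_def not_less)
  qed
  have "AE \<omega> in ?Pi. \<forall>k. \<exists>n. cost P (ao_run P A n \<omega>) - opt_cost P < 1 / real (Suc k)"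
    using null by (simp add: AE_all_countable)
  then show ?thesis
  proof (rule AE_mp[OF _ AE_I2[OF impI]])
    fix \<omega> assume sp: "\<omega> \<in> space ?Pi"
      and H: "\<forall>k. \<exists>n. cost P (ao_run P A n \<omega>) - opt_cost P < 1 / real (Suc k)"
    have dec: "decseq (\<lambda>n. cost P (ao_run P A n \<omega>))"
      by (rule decseq_SucI) (use ao_bounds[OF sp] in auto)
    show "(\<lambda>n. cost P (ao_run P A n \<omega>)) \<longlonglongrightarrow> opt_cost P"
    proof (rule LIMSEQ_I)
      fix r :: real assume r: "0 < r"
      obtain k where k: "inverse (real (Suc k)) < r" using reals_Archimedean[OF r] by blast
      obtain n0 where n0: "cost P (ao_run P A n0 \<omega>) - opt_cost P < 1 / real (Suc k)" using H by blast
      show "\<exists>no. \<forall>n\<ge>no. norm (cost P (ao_run P A n \<omega>) - opt_cost P) < r"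
      proof (intro exI allI impI)
        fix n assume "n0 \<le> n"
        then have "cost P (ao_run P A n \<omega>) \<le> cost P (ao_run P A n0 \<omega>)" using dec by (simp add: decseq_def)
        moreover have "opt_cost P \<le> cost P (ao_run P A n \<omega>)" using ao_bounds[OF sp] by auto
        ultimately show "norm (cost P (ao_run P A n \<omega>) - opt_cost P) < r"
          using n0 k by (simp add: inverse_eq_divide)
      qed
    qed
  qed
qed

end

theorem theorem3:
  fixes P :: "('x::real_normed_vector, 'u) opt_problem"
    and R :: "'r measure"
    and A :: "ereal \<Rightarrow> 'r \<Rightarrow> ('x, 'u) traj"
  assumes attained: "\<exists>t. feasible P t \<and> (\<forall>t'. feasible P t' \<longrightarrow> cost P t \<le> cost P t')"
    and planner: "randomized_planner P R A"
    and wb: "well_behaved P R A"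
  shows "(\<forall>\<epsilon>>0. (\<lambda>n. measure (PiM UNIV (\<lambda>_::nat. R))
              {\<omega> \<in> space (PiM UNIV (\<lambda>_::nat. R)). cost P (ao_run P A n \<omega>) - opt_cost P \<ge> \<epsilon>})
            \<longlonglongrightarrow> 0)
       \<and> (AE \<omega> in PiM UNIV (\<lambda>_::nat. R). (\<lambda>n. cost P (ao_run P A n \<omega>)) \<longlonglongrightarrow> opt_cost P)"
proof -
  interpret setting P R A using assms by unfold_locales
  show ?thesis using conv_prob conv_ae by blast
qed

end
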